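(* Let $\mathcal A,\mathcal B$ be unital $C^*$-algebras with faithful traces $\tau,\omega$, respectively, let $J:\mathcal A\to\mathcal B$ be a Jordan *-isomorphism and $X_0\in\mathcal B$ self-adjoint such that $\omega(\exp(J(T)+X_0))=\tau(\exp(T))$ for all self-adjoint $T\in\mathcal A$. Then $X_0$ is a central element of $\mathcal B$.
   Context: A trace is a positive linear functional with $\tau(AB)=\tau(BA)$; faithful means $\tau(A)=0$, $A\ge0$ implies $A=0$. A Jordan *-isomorphism is a linear bijection $J$ with $J(XY+YX)=J(X)J(Y)+J(Y)J(X)$ and $J(X^* )=J(X)^*$. *)

theory Defs
  imports "HOL-Analysis.Analysis"
begin

text \<open>A unital C*-algebra: a (real) unital Banach algebra carrying, in addition,
  a complex scalar multiplication cs extending the real one, and an involution adj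
  that is conjugate-linear, anti-multiplicative and satisfies the C*-identity.\<close>

definition cstar_algebra ::
  "(complex \<Rightarrow> 'a::{real_normed_algebra_1,banach} \<Rightarrow> 'a) \<Rightarrow> ('a \<Rightarrow> 'a) \<Rightarrow> bool" where
  "cstar_algebra cs adj \<longleftrightarrow>
     (\<forall>r x. cs (complex_of_real r) x = scaleR r x) \<and>
     (\<forall>a b x. cs (a * b) x = cs a (cs b x)) \<and>
     (\<forall>a b x. cs (a + b) x = cs a x + cs b x) \<and>
     (\<forall>a x y. cs a (x + y) = cs a x + cs a y) \<and>
     (\<forall>a x y. cs a (x * y) = cs a x * y \<and> cs a (x * y) = x * cs a y) \<and>
     (\<forall>a x. norm (cs a x) = cmod a * norm x) \<and>
     (\<forall>x. adj (adj x) = x) \<and>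
     (\<forall>x y. adj (x + y) = adj x + adj y) \<and>
     (\<forall>a x. adj (cs a x) = cs (cnj a) (adj x)) \<and>
     (\<forall>x y. adj (x * y) = adj y * adj x) \<and>
     (\<forall>x. norm (adj x * x) = (norm x)\<^sup>2)"

definition positive_el :: "('a::{real_normed_algebra_1,banach} \<Rightarrow> 'a) \<Rightarrow> 'a \<Rightarrow> bool" where
  "positive_el adj A \<longleftrightarrow> (\<exists>B. A = adj B * B)"

definition faithful_trace ::
  "(complex \<Rightarrow> 'a::{real_normed_algebra_1,banach} \<Rightarrow> 'a) \<Rightarrow> ('a \<Rightarrow> 'a) \<Rightarrow> ('a \<Rightarrow> complex) \<Rightarrow> bool" where
  "faithful_trace cs adj tau \<longleftrightarrow>
     (\<forall>x y. tau (x + y) = tau x + tau y) \<and>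
     (\<forall>a x. tau (cs a x) = a * tau x) \<and>
     (\<forall>A. positive_el adj A \<longrightarrow> Im (tau A) = 0 \<and> Re (tau A) \<ge> 0) \<and>
     (\<forall>A B. tau (A * B) = tau (B * A)) \<and>
     (\<forall>A. positive_el adj A \<and> tau A = 0 \<longrightarrow> A = 0)"

definition jordan_star_iso ::
  "(complex \<Rightarrow> 'a::{real_normed_algebra_1,banach} \<Rightarrow> 'a) \<Rightarrow> ('a \<Rightarrow> 'a) \<Rightarrow>
   (complex \<Rightarrow> 'b::{real_normed_algebra_1,banach} \<Rightarrow> 'b) \<Rightarrow> ('b \<Rightarrow> 'b) \<Rightarrow> ('a \<Rightarrow> 'b) \<Rightarrow> bool" where
  "jordan_star_iso csA adjA csB adjB J \<longleftrightarrow>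
     bij J \<and>
     (\<forall>x y. J (x + y) = J x + J y) \<and>
     (\<forall>a x. J (csA a x) = csB a (J x)) \<and>
     (\<forall>X Y. J (X * Y + Y * X) = J X * J Y + J Y * J X) \<and>
     (\<forall>X. J (adjA X) = adjB (J X))"

end

theory Submission
  imports Defs "HOL-Computational_Algebra.Formal_Power_Series"
begin

context
  fixes cs :: "complex \<Rightarrow> 'a::{real_normed_algebra_1,banach} \<Rightarrow> 'a" and adj :: "'a \<Rightarrow> 'a"
  assumes C: "cstar_algebra cs adj"
begin

lemma cs_real: "cs (complex_of_real r) x = r *\<^sub>R x"
  using C unfolding cstar_algebra_def by metis
lemma cs_mult: "cs (a * b) x = cs a (cs b x)"
  using C unfolding cstar_algebra_def by metis
lemma cs_addl: "cs (a + b) x = cs a x + cs b x"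
  using C unfolding cstar_algebra_def by metis
lemma cs_addr: "cs a (x + y) = cs a x + cs a y"
  using C unfolding cstar_algebra_def by metis
lemma cs_multl: "cs a (x * y) = cs a x * y"
  using C unfolding cstar_algebra_def by metis
lemma cs_multr: "cs a (x * y) = x * cs a y"
  using C unfolding cstar_algebra_def by metis
lemma adj_adj[simp]: "adj (adj x) = x"
  using C unfolding cstar_algebra_def by metis
lemma adj_add: "adj (x + y) = adj x + adj y"
  using C unfolding cstar_algebra_def by metis
lemma adj_cs: "adj (cs a x) = cs (cnj a) (adj x)"
  using C unfolding cstar_algebra_def by metis
lemma adj_mult: "adj (x * y) = adj y * adj x"
  using C unfolding cstar_algebra_def by metis
lemma cstar_id: "norm (adj x * x) = (norm x)\<^sup>2"
  using C unfolding cstar_algebra_def by metis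

lemma adj_scaleR: "adj (r *\<^sub>R x) = r *\<^sub>R adj x"
  using adj_cs[of "complex_of_real r" x] by (simp add: cs_real)

lemma norm_adj_le: "norm x \<le> norm (adj x)"
proof (cases "x = 0")
  case True then show ?thesis by simp
next
  case False
  have "(norm x)\<^sup>2 \<le> norm (adj x) * norm x"
    using cstar_id[of x] norm_mult_ineq[of "adj x" x] by simp
  then show ?thesis using False by (simp add: power2_eq_square)
qed

lemma norm_adj[simp]: "norm (adj x) = norm x"
  using norm_adj_le[of x] norm_adj_le[of "adj x"] by simp

lemma bl_adj: "bounded_linear adj"
  by (rule bounded_linear_intro[where K=1]) (auto simp: adj_add adj_scaleR)

lemma adj_0[simp]: "adj 0 = 0"
  using linear_0[OF bounded_linear.linear[OF bl_adj]] .
lemma adj_minus: "adj (- x) = - adj x"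
  using linear_neg[OF bounded_linear.linear[OF bl_adj]] .
lemma adj_diff: "adj (x - y) = adj x - adj y"
  using linear_diff[OF bounded_linear.linear[OF bl_adj]] .

lemma adj_one[simp]: "adj 1 = 1"
proof -
  have "\<And>y. y = adj 1 * y"
  proof -
    fix y
    have "adj (adj y * 1) = adj 1 * adj (adj y)" by (rule adj_mult)
    then show "y = adj 1 * y" by simp
  qed
  from this[of 1] show ?thesis by simp
qed

lemma adj_power: "adj (x ^ n) = (adj x) ^ n"
  by (induction n) (auto simp: adj_mult power_commutes)

lemma adj_exp: "adj (exp x) = exp (adj x)"
proof -
  have "(\<lambda>n. adj (x ^ n /\<^sub>R fact n)) sums adj (exp x)"
    by (rule bounded_linear.sums[OF bl_adj exp_converges])
  then have "(\<lambda>n. (adj x) ^ n /\<^sub>R fact n) sums adj (exp x)"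
    by (simp add: adj_scaleR adj_power)
  then show ?thesis using exp_converges by (rule sums_unique2)
qed

lemma norm_zero_if: "adj x * x = 0 \<Longrightarrow> x = 0"
  using cstar_id[of x] by simp

lemma cs_norm: "norm (cs a x) = cmod a * norm x"
  using C unfolding cstar_algebra_def by metis

lemma cs_minus1: "cs (-1) x = - x"
  using cs_real[of "-1" x] by simp

lemma cs_neg: "cs a (- x) = - cs a x"
proof -
  have "cs a (- x) = cs a (cs (-1) x)" by (simp add: cs_minus1)
  also have "... = cs (a * -1) x" by (rule cs_mult[symmetric])
  also have "... = cs (-1 * a) x" by (simp only: mult.commute)
  also have "... = cs (-1) (cs a x)" by (rule cs_mult)
  also have "... = - cs a x" by (rule cs_minus1)
  finally show ?thesis .
qed

lemma cs_diffr: "cs a (x - y) = cs a x - cs a y"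
  using cs_addr[of a x "-y"] by (simp add: cs_neg)

lemma gchoose_half_bound: "\<bar>((1/2::real) gchoose n)\<bar> \<le> 1"
proof (induction n)
  case 0 then show ?case by simp
next
  case (Suc n)
  have e1: "fact (Suc n) * ((1/2::real) gchoose Suc n) = (\<Prod>i = 0..<Suc n. 1/2 - of_nat i)"
    by (rule gbinomial_mult_fact)
  have e2: "fact n * ((1/2::real) gchoose n) = (\<Prod>i = 0..<n. 1/2 - of_nat i)"
    by (rule gbinomial_mult_fact)
  have "fact (Suc n) * ((1/2::real) gchoose Suc n) = fact n * ((1/2::real) gchoose n) * (1/2 - real n)"
    using e1 e2 by simp
  then have "fact n * ((real n + 1) * ((1/2::real) gchoose Suc n)) = fact n * (((1/2::real) gchoose n) * (1/2 - real n))"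
    by (simp add: fact_Suc algebra_simps)
  then have "(real n + 1) * ((1/2::real) gchoose Suc n) = ((1/2::real) gchoose n) * (1/2 - real n)"
    by simp
  then have "((1/2::real) gchoose Suc n) = ((1/2::real) gchoose n) * ((1/2 - real n) / (real n + 1))"
    by (simp add: field_simps)
  moreover have "\<bar>(1/2 - real n) / (real n + 1)\<bar> \<le> 1" by (simp add: field_simps abs_le_iff)
  moreover have "\<bar>((1/2::real) gchoose n)\<bar> * \<bar>(1/2 - real n) / (real n + 1)\<bar> \<le> 1 * 1"
    by (rule mult_mono) (use Suc.IH \<open>\<bar>(1/2 - real n) / (real n + 1)\<bar> \<le> 1\<close> in auto)
  ultimately show ?case by (simp only: abs_mult)
qed

lemma sqrt_ex:
  assumes sa: "adj z = z" and nz: "norm z < 1"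
  shows "\<exists>b. adj b = b \<and> adj b * b = 1 - z"
proof -
  define c where "c n = ((1/2::real) gchoose n) * (-1)^n" for n
  define a where "a n = c n *\<^sub>R z ^ n" for n
  have na: "norm (a n) \<le> norm z ^ n" for n
  proof -
    have "norm (a n) = \<bar>c n\<bar> * norm (z ^ n)" by (simp add: a_def)
    also have "... \<le> 1 * norm z ^ n"
      by (rule mult_mono) (auto simp: c_def abs_mult gchoose_half_bound norm_power_ineq)
    finally show ?thesis by simp
  qed
  have sn: "summable (\<lambda>n. norm (a n))"
    by (rule summable_comparison_test[OF _ summable_geometric[of "norm z"]]) (use na nz in auto)
  then have sa': "summable a" by (rule summable_norm_cancel)
  define b where "b = suminf a"
  have "adj b = (\<Sum>n. adj (a n))"
    unfolding b_def by (rule bounded_linear.suminf[OF bl_adj sa'])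
  also have "(\<lambda>n. adj (a n)) = a" by (rule ext) (simp add: a_def adj_scaleR adj_power sa)
  finally have "adj b = suminf a" .
  then have ab: "adj b = b" by (simp add: b_def)
  have "b * b = (\<Sum>k. \<Sum>i\<le>k. a i * a (k - i))"
    unfolding b_def by (rule Cauchy_product[OF sn sn])
  also have "... = (\<Sum>k. (of_nat (1 choose k) * (-1)^k) *\<^sub>R z ^ k)"
  proof (rule suminf_cong)
    fix k
    have "(\<Sum>i\<le>k. a i * a (k - i)) = (\<Sum>i\<le>k. (c i * c (k - i)) *\<^sub>R z ^ k)"
    proof (rule sum.cong)
      fix i assume "i \<in> {..k}"
      then have "z ^ i * z ^ (k - i) = z ^ k" by (simp add: power_add[symmetric])
      then show "a i * a (k - i) = (c i * c (k - i)) *\<^sub>R z ^ k"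
        by (simp add: a_def)
    qed simp
    also have "... = (\<Sum>i\<le>k. c i * c (k - i)) *\<^sub>R z ^ k"
      by (simp add: scaleR_sum_left)
    also have "(\<Sum>i\<le>k. c i * c (k - i)) = (-1)^k * (\<Sum>i\<le>k. ((1/2::real) gchoose i) * ((1/2) gchoose (k - i)))"
    proof -
      have "(\<Sum>i\<le>k. c i * c (k - i)) = (\<Sum>i\<le>k. (-1)^k * (((1/2::real) gchoose i) * ((1/2) gchoose (k - i))))"
      proof (rule sum.cong)
        fix i assume "i \<in> {..k}"
        then have "(-1::real)^i * (-1)^(k-i) = (-1)^k" by (simp add: power_add[symmetric])
        then show "c i * c (k - i) = (-1)^k * (((1/2::real) gchoose i) * ((1/2) gchoose (k - i)))"
          unfolding c_def by (metis (no_types, lifting) mult.commute mult.left_commute)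
      qed simp
      then show ?thesis by (simp add: sum_distrib_left)
    qed
    also have "(\<Sum>i\<le>k. ((1/2::real) gchoose i) * ((1/2) gchoose (k - i))) = (1/2 + 1/2) gchoose k"
      using gbinomial_Vandermonde[of "1/2::real" "1/2" k] by (simp add: atLeast0AtMost)
    also have "((1/2 + 1/2)::real) gchoose k = of_nat (1 choose k)"
      using binomial_gbinomial[of 1 k, where 'a=real] by simp
    finally show "(\<Sum>i\<le>k. a i * a (k - i)) = (of_nat (1 choose k) * (-1)^k) *\<^sub>R z ^ k"
      by (simp add: mult.commute)
  qed
  also have "... = (\<Sum>k\<in>{0,1}. (of_nat (1 choose k) * (-1)^k) *\<^sub>R z ^ k)"
  proof (rule suminf_finite)
    fix k assume "k \<notin> {0, 1::nat}"
    then have "1 < k" by auto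
    then show "(of_nat (1 choose k) * (-1)^k) *\<^sub>R z ^ k = 0" by simp
  qed simp
  also have "... = 1 - z" by simp
  finally show ?thesis using ab by auto
qed

context
  fixes f :: "'a \<Rightarrow> complex"
  assumes T: "faithful_trace cs adj f"
begin

lemma f_add: "f (x + y) = f x + f y"
  using T unfolding faithful_trace_def by metis
lemma f_cs: "f (cs a x) = a * f x"
  using T unfolding faithful_trace_def by metis
lemma f_pos: "positive_el adj A \<Longrightarrow> Im (f A) = 0 \<and> Re (f A) \<ge> 0"
  using T unfolding faithful_trace_def by metis
lemma f_comm: "f (A * B) = f (B * A)"
  using T unfolding faithful_trace_def by metis
lemma f_faithful: "positive_el adj A \<Longrightarrow> f A = 0 \<Longrightarrow> A = 0"
  using T unfolding faithful_trace_def by metis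

lemma f_scaleR: "f (r *\<^sub>R x) = of_real r * f x"
  using f_cs[of "complex_of_real r" x] by (simp add: cs_real)

lemma f_linear: "linear f"
  by (rule linearI) (auto simp: f_add, metis f_scaleR scaleR_conv_of_real)

lemma f_0[simp]: "f 0 = 0"
  using linear_0[OF f_linear] .
lemma f_diff: "f (x - y) = f x - f y"
  using linear_diff[OF f_linear] .
lemma f_minus: "f (- x) = - f x"
  using linear_neg[OF f_linear] .

lemma pos_one: "positive_el adj 1"
  unfolding positive_el_def by (rule exI[of _ 1]) simp

lemma f_small: 
  assumes "adj w = w" "norm w < 1"
  shows "cmod (f w) \<le> Re (f 1)"
proof -
  obtain b where "adj b = b" "adj b * b = 1 - w" using sqrt_ex assms by blast
  then have p1: "positive_el adj (1 - w)" unfolding positive_el_def by metis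
  have "adj (- w) = - w" using assms by (simp add: adj_minus)
  then obtain b' where "adj b' * b' = 1 - (- w)" using sqrt_ex assms by fastforce
  then have p2: "positive_el adj (1 + w)" unfolding positive_el_def by (metis diff_minus_eq_add)
  have q1: "Im (f 1) = 0" "Re (f 1) \<ge> 0" using f_pos[OF pos_one] by auto
  have r1: "Im (f 1 - f w) = 0" "Re (f 1 - f w) \<ge> 0" using f_pos[OF p1] by (auto simp: f_diff)
  have r2: "Im (f 1 + f w) = 0" "Re (f 1 + f w) \<ge> 0" using f_pos[OF p2] by (auto simp: f_add)
  have "Im (f w) = 0" using q1 r1 by simp
  then have "cmod (f w) = \<bar>Re (f w)\<bar>" by (simp add: cmod_def)
  also have "... \<le> Re (f 1)" using r1 r2 by auto
  finally show ?thesis .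
qed

lemma f_sa_bound:
  assumes "adj z = z"
  shows "cmod (f z) \<le> 2 * Re (f 1) * norm z"
proof (cases "z = 0")
  case True then show ?thesis by simp
next
  case False
  define w where "w = (1 / (2 * norm z)) *\<^sub>R z"
  have nw: "norm w = 1/2" using False by (simp add: w_def)
  have aw: "adj w = w" by (simp add: w_def adj_scaleR assms)
  have zw: "z = (2 * norm z) *\<^sub>R w" using False by (simp add: w_def)
  have "cmod (f z) = 2 * norm z * cmod (f w)"
    by (subst zw, simp add: f_scaleR norm_mult)
  also have "... \<le> 2 * norm z * Re (f 1)"
    using f_small[OF aw] nw by (intro mult_left_mono) auto
  finally show ?thesis by (simp add: mult_ac)
qed

end

lemma decomp:
  "\<exists>h k. adj h = h \<and> adj k = k \<and> x = h + cs \<i> k \<and> norm h \<le> norm x \<and> norm k \<le> norm x"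
proof -
  define h where "h = (1/2) *\<^sub>R (x + adj x)"
  define k where "k = cs (- \<i> / 2) (x - adj x)"
  have ah: "adj h = h" by (simp add: h_def adj_scaleR adj_add add.commute)
  have "adj k = cs (\<i> / 2) (adj x - x)" by (simp add: k_def adj_cs adj_diff)
  also have "... = cs (\<i> / 2) (- (x - adj x))" by simp
  also have "... = k" unfolding k_def cs_neg
    by (metis cs_mult cs_minus1 mult.commute mult_minus1 minus_divide_left)
  finally have ak: "adj k = k" .
  have e: "\<i> * (- \<i> / 2) = complex_of_real (1/2)" by (simp add: field_simps)
  have "cs \<i> k = cs (complex_of_real (1/2)) (x - adj x)" unfolding k_def cs_mult[symmetric] e ..
  then have "cs \<i> k = (1/2) *\<^sub>R (x - adj x)" using cs_real[of "1/2" "x - adj x"] by simp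
  moreover have "(1/2) *\<^sub>R (x + adj x) + (1/2) *\<^sub>R (x - adj x) = x"
  proof -
    have "(1/2) *\<^sub>R (x + adj x) + (1/2) *\<^sub>R (x - adj x) = (1/2::real) *\<^sub>R ((x + adj x) + (x - adj x))"
      by (rule scaleR_add_right[symmetric])
    also have "(x + adj x) + (x - adj x) = 2 *\<^sub>R x" by (simp add: scaleR_2)
    finally show ?thesis by simp
  qed
  ultimately have xe: "x = h + cs \<i> k" by (simp add: h_def)
  have "norm h \<le> (1/2) * (norm x + norm (adj x))"
    unfolding h_def using norm_triangle_ineq[of x "adj x"] by simp
  then have nh: "norm h \<le> norm x" by simp
  have "norm k = (1/2) * norm (x - adj x)" by (simp add: k_def cs_norm)
  also have "... \<le> (1/2) * (norm x + norm (adj x))"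
    by (intro mult_left_mono norm_triangle_ineq4) auto
  finally have nk: "norm k \<le> norm x" by simp
  show ?thesis using ah ak xe nh nk by blast
qed

context
  fixes f :: "'a \<Rightarrow> complex"
  assumes T: "faithful_trace cs adj f"
begin

lemma f_bl: "bounded_linear f"
proof (rule bounded_linear_intro[where K="4 * Re (f 1)"])
  show "f (x + y) = f x + f y" for x y by (rule f_add[OF T])
  show "f (r *\<^sub>R x) = r *\<^sub>R f x" for r x by (metis f_scaleR[OF T] scaleR_conv_of_real)
  fix x
  obtain h k where hk: "adj h = h" "adj k = k" "x = h + cs \<i> k" "norm h \<le> norm x" "norm k \<le> norm x"
    using decomp by blast
  have "f x = f h + \<i> * f k" using hk by (simp add: f_add[OF T] f_cs[OF T])
  then have "norm (f x) \<le> cmod (f h) + cmod (f k)" by (simp add: norm_triangle_ineq[THEN order_trans] norm_mult)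
  also have "... \<le> 2 * Re (f 1) * norm h + 2 * Re (f 1) * norm k"
    using f_sa_bound[OF T hk(1)] f_sa_bound[OF T hk(2)] by simp
  also have "... \<le> 2 * Re (f 1) * norm x + 2 * Re (f 1) * norm x"
    using hk f_pos[OF T pos_one[OF T]] by (intro add_mono mult_left_mono) auto
  finally show "norm (f x) \<le> norm x * (4 * Re (f 1))" by simp
qed

end

end

definition Ls :: "'a::real_normed_algebra_1 \<Rightarrow> 'a \<Rightarrow> nat \<Rightarrow> 'a" where
  "Ls A B n = (\<Sum>k<n. A ^ k * B * A ^ (n - 1 - k))"

lemma Ls_0[simp]: "Ls A B 0 = 0" by (simp add: Ls_def)

lemma Ls_Suc: "Ls A B (Suc n) = A * Ls A B n + B * A ^ n"
proof -
  have "Ls A B (Suc n) = B * A ^ n + (\<Sum>k<n. A ^ Suc k * B * A ^ (Suc n - 1 - Suc k))"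
    unfolding Ls_def by (subst sum.lessThan_Suc_shift) simp
  also have "(\<Sum>k<n. A ^ Suc k * B * A ^ (Suc n - 1 - Suc k)) = A * Ls A B n"
    unfolding Ls_def sum_distrib_left by (rule sum.cong) (auto simp: mult.assoc)
  finally show ?thesis by simp
qed

lemma pow_le4: "real (n * n) \<le> 4 ^ n"
proof -
  have "n < 2 ^ n" by (rule less_exp)
  then have "n * n \<le> 2 ^ n * 2 ^ n" by (intro mult_mono) auto
  also have "(2::nat) ^ n * 2 ^ n = 4 ^ n" by (simp add: power_mult_distrib[symmetric])
  finally have "n * n \<le> (4::nat) ^ n" .
  then show ?thesis by (metis of_nat_le_iff of_nat_numeral of_nat_power)
qed

lemma Ls_bound:
  fixes A B :: "'a::{real_normed_algebra_1,banach}"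
  shows "norm (Ls A B n) \<le> real n * norm B * (norm A + 1) ^ n"
proof (induction n)
  case 0 then show ?case by simp
next
  case (Suc n)
  have "norm (Ls A B (Suc n)) \<le> norm A * norm (Ls A B n) + norm B * norm A ^ n"
    unfolding Ls_Suc by (rule order_trans[OF norm_triangle_ineq add_mono])
       (auto intro!: order_trans[OF norm_mult_ineq] mult_left_mono norm_power_ineq)
  also have "... \<le> (norm A + 1) * (real n * norm B * (norm A + 1) ^ n) + norm B * (norm A + 1) ^ Suc n"
  proof (rule add_mono)
    show "norm A * norm (Ls A B n) \<le> (norm A + 1) * (real n * norm B * (norm A + 1) ^ n)"
      using Suc.IH by (intro mult_mono) auto
    have "norm A ^ n \<le> (norm A + 1) ^ n" by (intro power_mono) auto
    also have "... \<le> (norm A + 1) ^ Suc n" by (intro power_increasing) auto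
    finally show "norm B * norm A ^ n \<le> norm B * (norm A + 1) ^ Suc n" by (intro mult_left_mono) auto
  qed
  also have "... = real (Suc n) * norm B * (norm A + 1) ^ Suc n" by (simp add: algebra_simps)
  finally show ?case .
qed

definition Lser :: "'a::{real_normed_algebra_1,banach} \<Rightarrow> 'a \<Rightarrow> 'a" where
  "Lser A B = (\<Sum>n. Ls A B n /\<^sub>R fact n)"

lemma summable_real_exp4:
  fixes R :: real
  shows "summable (\<lambda>n. c * ((4 * R) ^ n / fact n))"
proof -
  have "summable (\<lambda>n. (4 * R) ^ n / fact n)" using summable_exp[of "4*R"] by (simp add: divide_inverse mult.commute)
  then show ?thesis by (rule summable_mult)
qed

lemma Lser_summable:
  fixes A B :: "'a::{real_normed_algebra_1,banach}"
  shows "summable (\<lambda>n. Ls A B n /\<^sub>R fact n)"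
proof -
  define R where "R = norm A + 1"
  have "summable (\<lambda>n. norm B * ((4 * R) ^ n / fact n))" by (rule summable_real_exp4)
  moreover have "norm (Ls A B n /\<^sub>R fact n) \<le> norm B * ((4 * R) ^ n / fact n)" for n
  proof -
    have "norm (Ls A B n) \<le> real n * norm B * R ^ n" using Ls_bound[of A B n] by (simp add: R_def)
    also have "... \<le> 4 ^ n * norm B * R ^ n"
    proof -
      have "real n \<le> real (n * n)" by (cases n) auto
      also have "... \<le> 4 ^ n" by (rule pow_le4)
      finally show ?thesis by (intro mult_right_mono) (auto simp: R_def)
    qed
    finally have "norm (Ls A B n) \<le> 4 ^ n * norm B * R ^ n" .
    then have "norm (Ls A B n) / fact n \<le> (4 ^ n * norm B * R ^ n) / fact n"
      by (rule divide_right_mono) simp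
    moreover have e2: "norm B * ((4 * R) ^ n / fact n) = (4 ^ n * norm B * R ^ n) / fact n"
      by (simp add: power_mult_distrib mult_ac)
    moreover have e3: "norm (Ls A B n /\<^sub>R fact n) = norm (Ls A B n) / fact n" by (simp add: divide_inverse mult.commute)
    ultimately show ?thesis by (simp only:)
  qed
  ultimately have "summable (\<lambda>n. norm (Ls A B n /\<^sub>R fact n))"
    using summable_norm_comparison_test[where f="\<lambda>n. Ls A B n /\<^sub>R fact n" and g="\<lambda>n. norm B * ((4 * R) ^ n / fact n)"]
    by blast
  then show ?thesis by (rule summable_norm_cancel)
qed

lemma first_order_bound:
  fixes A B :: "'a::{real_normed_algebra_1,banach}"
  shows "\<exists>K. \<forall>t. \<bar>t\<bar> \<le> 1 \<longrightarrow> norm (exp (A + t *\<^sub>R B) - exp A - t *\<^sub>R Lser A B) \<le> K * t\<^sup>2"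
proof -
  define R where "R = norm A + norm B + 1"
  define b where "b = norm B"
  have R1: "1 \<le> R" by (simp add: R_def)
  have bR: "0 \<le> b" by (simp add: b_def)
  have "norm (exp (A + t *\<^sub>R B) - exp A - t *\<^sub>R Lser A B) \<le> (b\<^sup>2 * exp (4 * R)) * t\<^sup>2"
    if t: "\<bar>t\<bar> \<le> 1" for t
  proof -
    define P where "P n = (A + t *\<^sub>R B) ^ n" for n
    have nAB: "norm (A + t *\<^sub>R B) \<le> R"
    proof -
      have "norm (A + t *\<^sub>R B) \<le> norm A + \<bar>t\<bar> * norm B" using norm_triangle_ineq[of A "t *\<^sub>R B"] by simp
      also have "... \<le> norm A + 1 * norm B" using t by (intro add_left_mono mult_right_mono) auto
      finally show ?thesis by (simp add: R_def)
    qed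
    have nA: "norm A \<le> R" by (simp add: R_def)
    have PR: "norm (P n) \<le> R ^ n" for n
      unfolding P_def by (rule order_trans[OF norm_power_ineq power_mono[OF nAB]]) auto
    have RSuc: "R ^ n \<le> R ^ Suc n" for n using R1 by (intro power_increasing) auto
    have PA: "norm (P n - A ^ n) \<le> real n * \<bar>t\<bar> * b * R ^ n" for n
    proof (induction n)
      case 0 then show ?case by (simp add: P_def)
    next
      case (Suc n)
      have "P (Suc n) - A ^ Suc n = A * (P n - A ^ n) + t *\<^sub>R (B * P n)"
        by (simp add: P_def algebra_simps)
      then have "norm (P (Suc n) - A ^ Suc n) \<le> norm A * norm (P n - A ^ n) + \<bar>t\<bar> * (b * norm (P n))"
        by (auto simp: b_def intro!: order_trans[OF norm_triangle_ineq add_mono] norm_mult_ineq mult_left_mono)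
      also have "... \<le> R * (real n * \<bar>t\<bar> * b * R ^ n) + \<bar>t\<bar> * (b * R ^ Suc n)"
        using Suc.IH nA order_trans[OF PR[of n] RSuc[of n]] bR R1
        by (intro add_mono mult_mono mult_left_mono) auto
      also have "... = real (Suc n) * \<bar>t\<bar> * b * R ^ Suc n" by (simp add: algebra_simps)
      finally show ?case .
    qed
    define D where "D n = P n - A ^ n - t *\<^sub>R Ls A B n" for n
    have DB: "norm (D n) \<le> real (n * n) * t\<^sup>2 * b\<^sup>2 * R ^ n" for n
    proof (induction n)
      case 0 then show ?case by (simp add: D_def P_def)
    next
      case (Suc n)
      have "D (Suc n) = A * D n + t *\<^sub>R (B * (P n - A ^ n))"
        by (simp add: D_def P_def Ls_Suc algebra_simps)
      then have "norm (D (Suc n)) \<le> norm A * norm (D n) + \<bar>t\<bar> * (b * norm (P n - A ^ n))"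
        by (auto simp: b_def intro!: order_trans[OF norm_triangle_ineq add_mono] norm_mult_ineq mult_left_mono)
      also have "... \<le> R * (real (n * n) * t\<^sup>2 * b\<^sup>2 * R ^ n) + \<bar>t\<bar> * (b * (real n * \<bar>t\<bar> * b * R ^ Suc n))"
      proof (intro add_mono mult_mono mult_left_mono)
        show "norm (P n - A ^ n) \<le> real n * \<bar>t\<bar> * b * R ^ Suc n"
          using PA[of n] RSuc[of n] bR by (rule_tac order_trans[OF PA[of n]]) (auto intro!: mult_left_mono)
      qed (use Suc.IH nA bR R1 in auto)
      also have "... = real (n * n + n) * t\<^sup>2 * b\<^sup>2 * R ^ Suc n" by (simp add: algebra_simps power2_eq_square)
      also have "... \<le> real (Suc n * Suc n) * t\<^sup>2 * b\<^sup>2 * R ^ Suc n"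
        using R1 by (intro mult_right_mono) auto
      finally show ?case .
    qed
    have s1: "(\<lambda>n. P n /\<^sub>R fact n) sums exp (A + t *\<^sub>R B)" unfolding P_def by (rule exp_converges)
    have s2: "(\<lambda>n. A ^ n /\<^sub>R fact n) sums exp A" by (rule exp_converges)
    have s3: "(\<lambda>n. t *\<^sub>R (Ls A B n /\<^sub>R fact n)) sums (t *\<^sub>R Lser A B)"
      unfolding Lser_def by (rule sums_scaleR_right[OF summable_sums[OF Lser_summable]])
    have sD: "(\<lambda>n. D n /\<^sub>R fact n) sums (exp (A + t *\<^sub>R B) - exp A - t *\<^sub>R Lser A B)"
      using sums_diff[OF sums_diff[OF s1 s2] s3] by (simp add: D_def algebra_simps)
    have sG: "(\<lambda>n. (t\<^sup>2 * b\<^sup>2) * ((4 * R) ^ n / fact n)) sums ((t\<^sup>2 * b\<^sup>2) * exp (4 * R))"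
    proof -
      have "(\<lambda>n. (4 * R) ^ n /\<^sub>R fact n) sums exp (4 * R)" by (rule exp_converges)
      then have "(\<lambda>n. (t\<^sup>2 * b\<^sup>2) * ((4 * R) ^ n /\<^sub>R fact n)) sums ((t\<^sup>2 * b\<^sup>2) * exp (4 * R))"
        by (rule sums_mult)
      then show ?thesis by (simp add: divide_inverse mult_ac)
    qed
    have "norm (D n /\<^sub>R fact n) \<le> (t\<^sup>2 * b\<^sup>2) * ((4 * R) ^ n / fact n)" for n
    proof -
      have "norm (D n) \<le> real (n * n) * t\<^sup>2 * b\<^sup>2 * R ^ n" by (rule DB)
      also have "... \<le> 4 ^ n * t\<^sup>2 * b\<^sup>2 * R ^ n"
        using pow_le4[of n] R1 by (intro mult_right_mono) auto
      finally have "norm (D n) / fact n \<le> (4 ^ n * t\<^sup>2 * b\<^sup>2 * R ^ n) / fact n"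
        by (rule divide_right_mono) simp
      moreover have "(t\<^sup>2 * b\<^sup>2) * ((4 * R) ^ n / fact n) = (4 ^ n * t\<^sup>2 * b\<^sup>2 * R ^ n) / fact n"
        by (simp add: power_mult_distrib mult_ac)
      moreover have "norm (D n /\<^sub>R fact n) = norm (D n) / fact n" by (simp add: divide_inverse mult.commute)
      ultimately show ?thesis by (simp only:)
    qed
    then have "norm (exp (A + t *\<^sub>R B) - exp A - t *\<^sub>R Lser A B) \<le> (t\<^sup>2 * b\<^sup>2) * exp (4 * R)"
      by (rule norm_sums_le[OF sD sG])
    then show ?thesis by (simp add: mult_ac)
  qed
  then show ?thesis by blast
qed

lemma Lser_trace:
  fixes A B :: "'a::{real_normed_algebra_1,banach}" and f :: "'a \<Rightarrow> 'c::real_normed_vector"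
  assumes bl: "bounded_linear f" and tr: "\<And>x y. f (x * y) = f (y * x)"
  shows "f (Lser A B) = f (exp A * B)"
proof -
  interpret f: bounded_linear f by (rule bl)
  have fLs: "f (Ls A B n) = real n *\<^sub>R f (A ^ (n - 1) * B)" for n
  proof -
    have "f (Ls A B n) = (\<Sum>k<n. f (A ^ k * B * A ^ (n - 1 - k)))"
      unfolding Ls_def by (rule f.sum)
    also have "... = (\<Sum>k<n. f (A ^ (n - 1) * B))"
    proof (rule sum.cong)
      fix k assume "k \<in> {..<n}"
      then have "A ^ (n - 1 - k) * A ^ k = A ^ (n - 1)" by (simp add: power_add[symmetric])
      then show "f (A ^ k * B * A ^ (n - 1 - k)) = f (A ^ (n - 1) * B)"
        using tr[of "A ^ k * B" "A ^ (n - 1 - k)"] by (simp add: mult.assoc[symmetric])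
    qed simp
    finally show ?thesis by (simp add: sum_constant_scaleR)
  qed
  have s: "(\<lambda>n. f (Ls A B n /\<^sub>R fact n)) sums f (Lser A B)"
    unfolding Lser_def by (rule f.sums[OF summable_sums[OF Lser_summable]])
  have sA: "(\<lambda>m. f (Ls A B (Suc m) /\<^sub>R fact (Suc m))) sums f (Lser A B)"
    using s by (subst sums_Suc_iff) simp
  have eqm: "f (Ls A B (Suc m) /\<^sub>R fact (Suc m)) = f ((A ^ m /\<^sub>R fact m) * B)" for m
  proof -
    have fS: "f (Ls A B (Suc m)) = real (Suc m) *\<^sub>R f (A ^ m * B)" using fLs[of "Suc m"] by simp
    have c: "inverse (fact (Suc m)) * real (Suc m) = 1 / (fact m :: real)"
      by (simp add: fact_Suc divide_simps)
    have "f (Ls A B (Suc m) /\<^sub>R fact (Suc m)) = (inverse (fact (Suc m)) * real (Suc m)) *\<^sub>R f (A ^ m * B)"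
      by (simp only: f.scaleR fS scaleR_scaleR)
    also have "... = (1 / fact m) *\<^sub>R f (A ^ m * B)" by (simp only: c)
    also have "... = f ((A ^ m /\<^sub>R fact m) * B)" by (simp add: f.scaleR divide_inverse)
    finally show ?thesis .
  qed
  have eqf: "(\<lambda>m. f (Ls A B (Suc m) /\<^sub>R fact (Suc m))) = (\<lambda>m. f ((A ^ m /\<^sub>R fact m) * B))"
    by (rule ext) (rule eqm)
  have "(\<lambda>m. f ((A ^ m /\<^sub>R fact m) * B)) sums f (Lser A B)" using sA unfolding eqf .
  moreover have "(\<lambda>m. f ((A ^ m /\<^sub>R fact m) * B)) sums f (exp A * B)"
    by (rule f.sums[OF sums_mult2[OF exp_converges]])
  ultimately show ?thesis by (rule sums_unique2)
qed

lemma commute_from_exp: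
  fixes X K :: "'a::{real_normed_algebra_1,banach}"
  assumes "\<And>t. X * exp (t *\<^sub>R K) = exp (t *\<^sub>R K) * X"
  shows "X * K = K * X"
proof -
  have d: "((\<lambda>t. exp (t *\<^sub>R K)) has_vector_derivative K) (at 0)"
    using exp_scaleR_has_vector_derivative_right[where A=K and t=0 and T=UNIV] by simp
  have "((\<lambda>t. X * exp (t *\<^sub>R K) - exp (t *\<^sub>R K) * X) has_vector_derivative (X * K - K * X)) (at 0)"
    by (intro has_vector_derivative_diff has_vector_derivative_mult_right has_vector_derivative_mult_left d)
  moreover have "(\<lambda>t. X * exp (t *\<^sub>R K) - exp (t *\<^sub>R K) * X) = (\<lambda>t. 0)"
    using assms by auto
  ultimately have "((\<lambda>t. 0) has_vector_derivative (X * K - K * X)) (at (0::real))" by simp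
  then have "X * K - K * X = 0"
    using vector_derivative_unique_at has_vector_derivative_const by blast
  then show ?thesis by simp
qed

lemma small_lemma:
  fixes d M :: real
  assumes "0 \<le> d" "\<And>t. 0 < t \<Longrightarrow> t \<le> 1 \<Longrightarrow> d \<le> M * t"
  shows "d = 0"
proof (rule ccontr)
  assume "d \<noteq> 0"
  then have dp: "0 < d" using assms by auto
  define t where "t = d / (2 * (\<bar>M\<bar> + d))"
  have tp: "0 < t" using dp by (simp add: t_def)
  have t1: "t \<le> 1" using dp by (simp add: t_def field_simps)
  have "d \<le> M * t" using assms(2) tp t1 by blast
  also have "... \<le> \<bar>M\<bar> * t" using tp by (intro mult_right_mono) auto
  also have "... < d"
  proof -
    have "\<bar>M\<bar> * t = d * (\<bar>M\<bar> / (2 * (\<bar>M\<bar> + d)))" by (simp add: t_def)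
    also have "\<bar>M\<bar> / (2 * (\<bar>M\<bar> + d)) < 1" using dp by (simp add: field_simps)
    then have "d * (\<bar>M\<bar> / (2 * (\<bar>M\<bar> + d))) < d * 1" using dp by (intro mult_strict_left_mono) auto
    finally show ?thesis by simp
  qed
  finally show False by simp
qed

lemma half_fact_k: "inverse (fact n) / 2 = 1 / (fact n * (2::real))"
  by (simp add: field_simps)

lemma half_fact:
  fixes E H Y :: "'b::real_normed_algebra_1"
  shows "((1/2) *\<^sub>R (E * (H^n /\<^sub>R fact n) + (H^n /\<^sub>R fact n) * E)) * Y = (1 / fact n) *\<^sub>R (((1/2) *\<^sub>R (E * H^n + H^n * E)) * Y)"
  by (simp add: scaleR_add_right distrib_right half_fact_k)

lemma comm_trace_lemma:
  fixes E G :: "'b::real_normed_algebra_1" and w :: "'b \<Rightarrow> complex"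
  assumes wadd: "\<And>x y. w (x + y) = w x + w y" and wdiff: "\<And>x y. w (x - y) = w x - w y"
    and comm: "\<And>x y. w (x * y) = w (y * x)"
    and eq: "E * (E * (G * G) + G * G * E) + (E * (G * G) + G * G * E) * E = (E * G + G * E) * (E * G + G * E)"
  shows "w ((G * E - E * G) * (E * G - G * E)) = 0"
proof -
  have r: "(G * E - E * G) * (E * G - G * E) = ((G * E * E * G - E * E * G * G) + (G * E * E * G - G * G * E * E))
      + ((E * (E * (G * G) + G * G * E) + (E * (G * G) + G * G * E) * E) - (E * G + G * E) * (E * G + G * E))"
    by (simp add: algebra_simps)
  have w1: "w (G * E * E * G) = w (E * E * G * G)"
    using comm[of G "E * E * G"] by (simp add: mult.assoc)
  have w2: "w (G * E * E * G) = w (G * G * E * E)"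
    using comm[of "G * E * E" G] by (simp add: mult.assoc)
  have w0: "w 0 = 0" using wdiff[of 0 0] by simp
  have z: "(E * (E * (G * G) + G * G * E) + (E * (G * G) + G * G * E) * E) - (E * G + G * E) * (E * G + G * E) = 0"
    using eq by simp
  show ?thesis unfolding r z using w1 w2 by (simp add: wadd wdiff)
qed

lemma cscal: "r *\<^sub>R (z::complex) = complex_of_real r * z"
  by (simp add: scaleR_conv_of_real)

theorem lemma20:
  fixes csA :: "complex \<Rightarrow> 'a::{real_normed_algebra_1,banach} \<Rightarrow> 'a"
    and adjA :: "'a \<Rightarrow> 'a"
    and csB :: "complex \<Rightarrow> 'b::{real_normed_algebra_1,banach} \<Rightarrow> 'b"
    and adjB :: "'b \<Rightarrow> 'b"
    and tau :: "'a \<Rightarrow> complex" and omega :: "'b \<Rightarrow> complex"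
    and J :: "'a \<Rightarrow> 'b" and X0 :: 'b
  assumes "cstar_algebra csA adjA"
    and "cstar_algebra csB adjB"
    and "faithful_trace csA adjA tau"
    and "faithful_trace csB adjB omega"
    and "jordan_star_iso csA adjA csB adjB J"
    and "adjB X0 = X0"
    and "\<forall>T. adjA T = T \<longrightarrow> omega (exp (J T + X0)) = tau (exp T)"
  shows "\<forall>Y. X0 * Y = Y * X0"
proof -
  note CA = assms(1) and CB = assms(2) and TA = assms(3) and TB = assms(4)
  have JJ: "jordan_star_iso csA adjA csB adjB J" by (rule assms(5))
  have sa0: "adjB X0 = X0" by (rule assms(6))
  have hyp: "\<And>T. adjA T = T \<Longrightarrow> omega (exp (J T + X0)) = tau (exp T)" using assms(7) by blast
  have Jbij: "bij J" using JJ unfolding jordan_star_iso_def by blast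
  have J_add: "\<And>x y. J (x + y) = J x + J y" using JJ unfolding jordan_star_iso_def by metis
  have J_cs: "\<And>a x. J (csA a x) = csB a (J x)" using JJ unfolding jordan_star_iso_def by metis
  have J_jor: "\<And>X Y. J (X * Y + Y * X) = J X * J Y + J Y * J X" using JJ unfolding jordan_star_iso_def by metis
  have J_adj: "\<And>X. J (adjA X) = adjB (J X)" using JJ unfolding jordan_star_iso_def by metis
  have J_scaleR: "\<And>r x. J (r *\<^sub>R x) = r *\<^sub>R J x"
    using J_cs cs_real[OF CA] cs_real[OF CB] by metis
  have J_lin: "linear J" by (rule linearI) (auto simp: J_add J_scaleR)
  have J_0: "J 0 = 0" using linear_0[OF J_lin] .
  have two: "\<And>a b :: 'b. a + a = b + b \<Longrightarrow> a = b"
  proof -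
    fix a b :: 'b assume "a + a = b + b"
    then have "(2::real) *\<^sub>R a = 2 *\<^sub>R b" by (simp add: scaleR_2)
    then show "a = b" by simp
  qed
  have Jsurj: "\<And>y. \<exists>x. J x = y" using Jbij unfolding bij_def surj_def by metis
  have Jinj: "\<And>x y. J x = J y \<Longrightarrow> x = y" using Jbij unfolding bij_def inj_def by blast
  have J_1: "J 1 = 1"
  proof -
    obtain x where x: "J x = 1" using Jsurj by blast
    have "J (x * 1 + 1 * x) = J x * J 1 + J 1 * J x" by (rule J_jor)
    then have "1 + 1 = J 1 + J 1" by (simp add: J_add x)
    then show ?thesis using two by metis
  qed
  have J_pow: "\<And>x n. J (x ^ n) = J x ^ n"
  proof -
    fix x n show "J (x ^ n) = J x ^ n"
    proof (induction n)
      case 0 then show ?case by (simp add: J_1)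
    next
      case (Suc n)
      have "J (x * x ^ n + x ^ n * x) = J x * J (x ^ n) + J (x ^ n) * J x" by (rule J_jor)
      then have "J (x ^ Suc n) + J (x ^ Suc n) = J x ^ Suc n + J x ^ Suc n"
        by (simp add: J_add Suc.IH power_commutes)
      then show ?case using two by metis
    qed
  qed
  have J_sa: "\<And>Y. adjB Y = Y \<Longrightarrow> \<exists>S. adjA S = S \<and> J S = Y"
  proof -
    fix Y assume aY: "adjB Y = Y"
    obtain S where S: "J S = Y" using Jsurj by blast
    have "J (adjA S) = J S" using J_adj aY S by simp
    then show "\<exists>S. adjA S = S \<and> J S = Y" using Jinj S by blast
  qed
  interpret bo: bounded_linear omega by (rule f_bl[OF CB TB])
  interpret bt: bounded_linear tau by (rule f_bl[OF CA TA])
  have om_comm: "\<And>x y. omega (x * y) = omega (y * x)" by (rule f_comm[OF CB TB])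
  have tau_comm: "\<And>x y. tau (x * y) = tau (y * x)" by (rule f_comm[OF CA TA])

  have step3: "\<And>T S. adjA T = T \<Longrightarrow> adjA S = S \<Longrightarrow> omega (exp (J T + X0) * J S) = tau (exp T * S)"
  proof -
    fix T S assume aT: "adjA T = T" and aS: "adjA S = S"
    define A1 where "A1 = J T + X0"
    define B1 where "B1 = J S"
    have eq: "omega (exp (A1 + t *\<^sub>R B1)) = tau (exp (T + t *\<^sub>R S))" for t
    proof -
      have "adjA (T + t *\<^sub>R S) = T + t *\<^sub>R S" by (simp add: adj_add[OF CA] adj_scaleR[OF CA] aT aS)
      then have "omega (exp (J (T + t *\<^sub>R S) + X0)) = tau (exp (T + t *\<^sub>R S))" by (rule hyp)
      moreover have "J (T + t *\<^sub>R S) + X0 = A1 + t *\<^sub>R B1"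
        by (simp add: A1_def B1_def J_add J_scaleR algebra_simps)
      ultimately show ?thesis by simp
    qed
    obtain K1 where K1: "\<forall>t. \<bar>t\<bar> \<le> 1 \<longrightarrow> norm (exp (A1 + t *\<^sub>R B1) - exp A1 - t *\<^sub>R Lser A1 B1) \<le> K1 * t\<^sup>2"
      using first_order_bound by blast
    obtain K2 where K2: "\<forall>t. \<bar>t\<bar> \<le> 1 \<longrightarrow> norm (exp (T + t *\<^sub>R S) - exp T - t *\<^sub>R Lser T S) \<le> K2 * t\<^sup>2"
      using first_order_bound by blast
    obtain C1 where C1: "\<And>x. norm (omega x) \<le> norm x * C1" "C1 > 0" using bo.pos_bounded by blast
    obtain C2 where C2: "\<And>x. norm (tau x) \<le> norm x * C2" "C2 > 0" using bt.pos_bounded by blast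
    have g1: "omega (Lser A1 B1) = omega (exp A1 * B1)" by (rule Lser_trace[OF f_bl[OF CB TB] om_comm])
    have g2: "tau (Lser T S) = tau (exp T * S)" by (rule Lser_trace[OF f_bl[OF CA TA] tau_comm])
    have e0: "omega (exp A1) = tau (exp T)" using eq[of 0] by simp
    define d where "d = cmod (omega (Lser A1 B1) - tau (Lser T S))"
    have "d = 0"
    proof (rule small_lemma[where M = "C1 * K1 + C2 * K2"])
      show "0 \<le> d" by (simp add: d_def)
      fix t :: real assume tp: "0 < t" "t \<le> 1"
      define e1 where "e1 = exp (A1 + t *\<^sub>R B1) - exp A1 - t *\<^sub>R Lser A1 B1"
      define e2 where "e2 = exp (T + t *\<^sub>R S) - exp T - t *\<^sub>R Lser T S"
      have n1: "norm e1 \<le> K1 * t\<^sup>2" using K1 tp by (simp add: e1_def)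
      have n2: "norm e2 \<le> K2 * t\<^sup>2" using K2 tp by (simp add: e2_def)
      have o1: "cmod (omega e1) \<le> C1 * (K1 * t\<^sup>2)"
        using order_trans[OF C1(1)[of e1] mult_right_mono[OF n1]] C1(2) by (simp add: mult_ac)
      have o2: "cmod (tau e2) \<le> C2 * (K2 * t\<^sup>2)"
        using order_trans[OF C2(1)[of e2] mult_right_mono[OF n2]] C2(2) by (simp add: mult_ac)
      have "omega e1 - tau e2 = complex_of_real t * (tau (Lser T S) - omega (Lser A1 B1))"
        using eq[of t] e0 by (simp add: e1_def e2_def bo.diff bt.diff bo.add bt.add bo.scaleR bt.scaleR cscal algebra_simps)
      then have "t * d = cmod (omega e1 - tau e2)" using tp by (simp add: d_def norm_mult norm_minus_commute)
      also have "... \<le> cmod (omega e1) + cmod (tau e2)" by (rule norm_triangle_ineq4)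
      also have "... \<le> (C1 * K1 + C2 * K2) * t\<^sup>2" using o1 o2 by (simp add: algebra_simps)
      finally have "t * d \<le> t * ((C1 * K1 + C2 * K2) * t)" by (simp add: power2_eq_square mult_ac)
      then show "d \<le> (C1 * K1 + C2 * K2) * t" using tp by simp
    qed
    then have "omega (Lser A1 B1) = tau (Lser T S)" by (simp add: d_def)
    then show "omega (exp (J T + X0) * J S) = tau (exp T * S)" using g1 g2 by (simp add: A1_def B1_def)
  qed

  define E where "E = exp X0"
  have aE: "adjB E = E" by (simp add: E_def adj_exp[OF CB] sa0)
  have tauS: "\<And>S. adjA S = S \<Longrightarrow> tau S = omega (E * J S)"
    using step3[of 0] J_0 adj_0[OF CA] by (simp add: E_def)
  have step4: "\<And>H Y. adjB H = H \<Longrightarrow> adjB Y = Y \<Longrightarrow>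
      omega (exp (H + X0) * Y) = omega (((1/2) *\<^sub>R (E * exp H + exp H * E)) * Y)"
  proof -
    fix H Y assume aH: "adjB H = H" and aY: "adjB Y = Y"
    obtain T where T: "adjA T = T" "J T = H" using J_sa aH by blast
    obtain S where S: "adjA S = S" "J S = Y" using J_sa aY by blast
    have l: "omega (exp (H + X0) * Y) = tau (exp T * S)" using step3[OF T(1) S(1)] T S by simp
    have trm: "tau (T ^ n * S) = omega (((1/2) *\<^sub>R (E * H ^ n + H ^ n * E)) * Y)" for n
    proof -
      have sa: "adjA (T ^ n * S + S * T ^ n) = T ^ n * S + S * T ^ n"
        by (simp add: adj_add[OF CA] adj_mult[OF CA] adj_power[OF CA] T(1) S(1) add.commute)
      have "tau (T ^ n * S + S * T ^ n) = omega (E * J (T ^ n * S + S * T ^ n))" by (rule tauS[OF sa])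
      also have "J (T ^ n * S + S * T ^ n) = H ^ n * Y + Y * H ^ n" using J_jor[of "T^n" S] J_pow T S by simp
      also have "omega (E * (H ^ n * Y + Y * H ^ n)) = omega ((E * H ^ n + H ^ n * E) * Y)"
      proof -
        have "omega (E * (Y * H ^ n)) = omega (H ^ n * E * Y)"
          using om_comm[of "E * Y" "H ^ n"] by (simp add: mult.assoc)
        then show ?thesis by (simp add: distrib_left distrib_right bo.add mult.assoc)
      qed
      finally have "tau (T ^ n * S) + tau (S * T ^ n) = omega ((E * H ^ n + H ^ n * E) * Y)" by (simp add: bt.add)
      then have "2 * tau (T ^ n * S) = omega ((E * H ^ n + H ^ n * E) * Y)"
        using tau_comm[of S "T ^ n"] by simp
      then show ?thesis by (simp add: bo.scaleR cscal mult.commute)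
    qed
    have s1: "(\<lambda>n. tau ((T ^ n /\<^sub>R fact n) * S)) sums tau (exp T * S)"
      by (rule bt.sums[OF sums_mult2[OF exp_converges]])
    have s2: "(\<lambda>n. omega (((1/2) *\<^sub>R (E * (H ^ n /\<^sub>R fact n) + (H ^ n /\<^sub>R fact n) * E)) * Y))
        sums omega (((1/2) *\<^sub>R (E * exp H + exp H * E)) * Y)"
    proof -
      have a1: "(\<lambda>n. H ^ n /\<^sub>R fact n) sums exp H" by (rule exp_converges)
      have a2: "(\<lambda>n. E * (H ^ n /\<^sub>R fact n)) sums (E * exp H)" by (rule sums_mult[OF a1])
      have a3: "(\<lambda>n. (H ^ n /\<^sub>R fact n) * E) sums (exp H * E)" by (rule sums_mult2[OF a1])
      have a4: "(\<lambda>n. E * (H ^ n /\<^sub>R fact n) + (H ^ n /\<^sub>R fact n) * E) sums (E * exp H + exp H * E)"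
        by (rule sums_add[OF a2 a3])
      have a5: "(\<lambda>n. (1/2) *\<^sub>R (E * (H ^ n /\<^sub>R fact n) + (H ^ n /\<^sub>R fact n) * E)) sums ((1/2) *\<^sub>R (E * exp H + exp H * E))"
        by (rule sums_scaleR_right[OF a4])
      have a6: "(\<lambda>n. ((1/2) *\<^sub>R (E * (H ^ n /\<^sub>R fact n) + (H ^ n /\<^sub>R fact n) * E)) * Y) sums (((1/2) *\<^sub>R (E * exp H + exp H * E)) * Y)"
        by (rule sums_mult2[OF a5])
      show ?thesis by (rule bo.sums[OF a6])
    qed
    have "(\<lambda>n. tau ((T ^ n /\<^sub>R fact n) * S)) = (\<lambda>n. omega (((1/2) *\<^sub>R (E * (H ^ n /\<^sub>R fact n) + (H ^ n /\<^sub>R fact n) * E)) * Y))"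
    proof
      fix n
      have "tau ((T ^ n /\<^sub>R fact n) * S) = (1 / fact n) *\<^sub>R tau (T ^ n * S)" by (simp add: bt.scaleR divide_inverse)
      also have "... = (1 / fact n) *\<^sub>R omega (((1/2) *\<^sub>R (E * H ^ n + H ^ n * E)) * Y)" by (simp only: trm)
      also have "... = omega (((1/2) *\<^sub>R (E * (H ^ n /\<^sub>R fact n) + (H ^ n /\<^sub>R fact n) * E)) * Y)"
        by (simp only: half_fact bo.scaleR)
      finally show "tau ((T ^ n /\<^sub>R fact n) * S) = omega (((1/2) *\<^sub>R (E * (H ^ n /\<^sub>R fact n) + (H ^ n /\<^sub>R fact n) * E)) * Y)" .
    qed
    then have "tau (exp T * S) = omega (((1/2) *\<^sub>R (E * exp H + exp H * E)) * Y)"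
      using s1 s2 by (metis sums_unique2)
    then show "omega (exp (H + X0) * Y) = omega (((1/2) *\<^sub>R (E * exp H + exp H * E)) * Y)" using l by simp
  qed
  have I: "\<And>H. adjB H = H \<Longrightarrow> 2 *\<^sub>R exp (H + X0) = E * exp H + exp H * E"
  proof -
    fix H assume aH: "adjB H = H"
    define Z where "Z = exp (H + X0) - (1/2) *\<^sub>R (E * exp H + exp H * E)"
    have aZ: "adjB Z = Z"
      by (simp add: Z_def adj_diff[OF CB] adj_exp[OF CB] adj_add[OF CB] adj_scaleR[OF CB] adj_mult[OF CB] aE aH sa0 add.commute)
    have "omega (Z * Z) = omega (exp (H + X0) * Z) - omega (((1/2) *\<^sub>R (E * exp H + exp H * E)) * Z)"
      by (simp add: Z_def left_diff_distrib bo.diff)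
    then have "omega (Z * Z) = 0" using step4[OF aH aZ] by simp
    then have "adjB Z * Z = 0" using f_faithful[OF CB TB, of "adjB Z * Z"] aZ unfolding positive_el_def by metis
    then have "Z = 0" by (rule norm_zero_if[OF CB])
    then have "exp (H + X0) = (1/2) *\<^sub>R (E * exp H + exp H * E)" by (simp add: Z_def)
    then show "2 *\<^sub>R exp (H + X0) = E * exp H + exp H * E" by simp
  qed
  have Ecomm: "\<And>K. adjB K = K \<Longrightarrow> E * exp K = exp K * E"
  proof -
    fix K assume aK: "adjB K = K"
    define G where "G = exp K"
    have aG: "adjB G = G" by (simp add: G_def adj_exp[OF CB] aK)
    have a2K: "adjB (2 *\<^sub>R K) = 2 *\<^sub>R K" by (simp add: adj_scaleR[OF CB] aK)
    have aX: "adjB (X0 + 2 *\<^sub>R K) = X0 + 2 *\<^sub>R K" by (simp add: adj_add[OF CB] adj_scaleR[OF CB] aK sa0)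
    have eKK: "exp (2 *\<^sub>R K) = G * G"
    proof -
      have e: "2 *\<^sub>R K = K + K" by (simp add: scaleR_2)
      show ?thesis unfolding e G_def by (rule exp_add_commuting) (rule refl)
    qed
    define e1 where "e1 = exp (K + X0)"
    define e2 where "e2 = exp (2 *\<^sub>R K + X0)"
    have P: "2 *\<^sub>R e1 = E * G + G * E" using I[OF aK] by (simp add: G_def e1_def)
    have Q: "2 *\<^sub>R e2 = E * (G * G) + G * G * E" using I[OF a2K] by (simp add: eKK e2_def)
    have R: "2 *\<^sub>R exp (X0 + 2 *\<^sub>R K + X0) = E * e2 + e2 * E"
    proof -
      have "exp (X0 + 2 *\<^sub>R K) = e2" by (simp add: e2_def add.commute)
      then show ?thesis using I[OF aX] by simp
    qed
    have sq: "exp (X0 + 2 *\<^sub>R K + X0) = e1 * e1"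
    proof -
      have e: "X0 + 2 *\<^sub>R K + X0 = (K + X0) + (K + X0)" by (simp add: scaleR_2 algebra_simps)
      show ?thesis unfolding e e1_def by (rule exp_add_commuting) (rule refl)
    qed
    have main: "E * (E * (G * G) + G * G * E) + (E * (G * G) + G * G * E) * E = (E * G + G * E) * (E * G + G * E)"
    proof -
      have "E * (E * (G * G) + G * G * E) + (E * (G * G) + G * G * E) * E = E * (2 *\<^sub>R e2) + (2 *\<^sub>R e2) * E"
        by (simp only: Q)
      also have "... = 2 *\<^sub>R (E * e2 + e2 * E)" by (simp add: scaleR_add_right)
      also have "... = 2 *\<^sub>R (2 *\<^sub>R (e1 * e1))" by (simp only: R[symmetric] sq)
      also have "... = (2 *\<^sub>R e1) * (2 *\<^sub>R e1)" by simp
      also have "... = (E * G + G * E) * (E * G + G * E)" by (simp only: P)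
      finally show ?thesis .
    qed
    have z: "omega ((G * E - E * G) * (E * G - G * E)) = 0"
      by (rule comm_trace_lemma[OF bo.add bo.diff om_comm main])
    define C where "C = E * G - G * E"
    have "adjB C = G * E - E * G" by (simp add: C_def adj_diff[OF CB] adj_mult[OF CB] aE aG)
    then have "omega (adjB C * C) = 0" using z by (simp add: C_def)
    then have "adjB C * C = 0" using f_faithful[OF CB TB, of "adjB C * C"] unfolding positive_el_def by blast
    then have "C = 0" by (rule norm_zero_if[OF CB])
    then show "E * exp K = exp K * E" by (simp add: C_def G_def)
  qed
  have EH: "\<And>K. adjB K = K \<Longrightarrow> E * K = K * E"
  proof -
    fix K assume aK: "adjB K = K"
    show "E * K = K * E"
    proof (rule commute_from_exp)
      fix t :: real
      have "adjB (t *\<^sub>R K) = t *\<^sub>R K" by (simp add: adj_scaleR[OF CB] aK)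
      then show "E * exp (t *\<^sub>R K) = exp (t *\<^sub>R K) * E" by (rule Ecomm)
    qed
  qed
  have step7: "\<And>H. adjB H = H \<Longrightarrow> X0 * exp H = exp H * X0"
  proof -
    fix H assume aH: "adjB H = H"
    have "2 *\<^sub>R exp (H + X0) = 2 *\<^sub>R (E * exp H)" using I[OF aH] Ecomm[OF aH] by (simp add: scaleR_2)
    then have e: "exp (H + X0) = E * exp H" by simp
    have c: "exp (H + X0) * (H + X0) = (H + X0) * exp (H + X0)" by (rule exp_times_arg_commute)
    have cEH: "E * H = H * E" by (rule EH[OF aH])
    have cEX: "E * X0 = X0 * E" by (simp add: E_def exp_times_arg_commute)
    have cHH: "exp H * H = H * exp H" by (rule exp_times_arg_commute)
    have 1: "E * (exp H * H) + E * (exp H * X0) = H * (E * exp H) + X0 * (E * exp H)"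
      using c unfolding e by (simp add: distrib_left distrib_right mult.assoc)
    have 2: "H * (E * exp H) = E * (exp H * H)"
    proof -
      have "H * (E * exp H) = (H * E) * exp H" by (simp add: mult.assoc)
      also have "... = (E * H) * exp H" by (simp add: cEH)
      also have "... = E * (H * exp H)" by (simp add: mult.assoc)
      finally show ?thesis by (simp add: cHH)
    qed
    have 3: "X0 * (E * exp H) = E * (X0 * exp H)"
    proof -
      have "X0 * (E * exp H) = (X0 * E) * exp H" by (simp add: mult.assoc)
      also have "... = (E * X0) * exp H" by (simp add: cEX)
      finally show ?thesis by (simp add: mult.assoc)
    qed
    have 4: "E * (exp H * X0) = E * (X0 * exp H)" using 1 2 3 by simp
    have inv: "exp (- X0) * E = 1" using exp_minus_inverse[of "- X0"] by (simp add: E_def)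
    have "exp (- X0) * (E * (exp H * X0)) = exp (- X0) * (E * (X0 * exp H))" using 4 by simp
    then have "(exp (- X0) * E) * (exp H * X0) = (exp (- X0) * E) * (X0 * exp H)" by (simp only: mult.assoc)
    then show "X0 * exp H = exp H * X0" using inv by simp
  qed
  have X0H: "\<And>H. adjB H = H \<Longrightarrow> X0 * H = H * X0"
  proof -
    fix H assume aH: "adjB H = H"
    show "X0 * H = H * X0"
    proof (rule commute_from_exp)
      fix t :: real
      have "adjB (t *\<^sub>R H) = t *\<^sub>R H" by (simp add: adj_scaleR[OF CB] aH)
      then show "X0 * exp (t *\<^sub>R H) = exp (t *\<^sub>R H) * X0" by (rule step7)
    qed
  qed
  show ?thesis
  proof
    fix Y
    obtain h k where hk: "adjB h = h" "adjB k = k" "Y = h + csB \<i> k"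
      using decomp[OF CB, of Y] by blast
    have "X0 * csB \<i> k = csB \<i> (X0 * k)" by (rule cs_multr[OF CB, symmetric])
    also have "... = csB \<i> (k * X0)" by (simp add: X0H[OF hk(2)])
    also have "... = csB \<i> k * X0" by (rule cs_multl[OF CB])
    finally have ck: "X0 * csB \<i> k = csB \<i> k * X0" .
    show "X0 * Y = Y * X0" using X0H[OF hk(1)] ck hk(3) by (simp add: distrib_left distrib_right)
  qed
qed

end
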